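(* Let $\Sigma$ be a closed Riemann surface of genus $g>1$ equipped with a smooth conformal background metric $h$, and let $U_0$ be a holomorphic cubic differential on $\Sigma$ which is not identically zero. For $\lambda>0$ let $u=u_\lambda$ be the solution of $$\Delta u+4e^{-2u}\|U\|^2-2e^u-2\kappa=0$$ for $U=\lambda U_0$, where $\Delta$, $\|\cdot\|$ and $\kappa$ are the Laplacian, pointwise norm and Gauss curvature of $h$. Let $K$ be a compact subset of $\Sigma$ containing no zero of $U_0$. Then there is a constant $C=C(\Sigma,U_0,K)$ such that on $K$ $$\tfrac12\ \ge\ \|U\|^2e^{-3u_\lambda}\ \ge\ \tfrac12-C\lambda^{-2/3}.$$
   Context: The quantity $\|U\|^2_h e^{-3u}$ equals $|U|^2/(e^uh)^3$, the pointwise norm squared of $U$ with respect to the metric $e^{u}h$. The Laplacian is the nonnegative-spectrum-sign convention in which, for $h=|dz|^2$ locally, $\Delta=4\partial_z\partial_{\bar z}$, so that with $e^uh=e^\psi|dz|^2$ and $U=U(z)dz^3$ the equation reads $\psi_{z\bar z}+|U|^2e^{-2\psi}-\tfrac12 e^\psi=0$. *)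

theory Defs
  imports "HOL-Homology.Homology" "HOL-Complex_Analysis.Complex_Analysis"
begin

text \<open>All local objects (metric density,
cubic differential) are given by their local expressions in each chart of the atlas,
subject to the usual transformation laws.\<close>

type_synonym 'a chart = "'a set \<times> ('a \<Rightarrow> complex)"

definition transition :: "'a chart \<Rightarrow> 'a chart \<Rightarrow> complex \<Rightarrow> complex" where
  "transition c d = snd d \<circ> inv_into (fst c) (snd c)"

definition riemann_surface :: "'a topology \<Rightarrow> 'a chart set \<Rightarrow> bool" where
  "riemann_surface X A \<longleftrightarrow>
     compact_space X \<and> Hausdorff_space X \<and> connected_space X \<and> topspace X \<noteq> {} \<and>
     (\<Union>c\<in>A. fst c) = topspace X \<and>
     (\<forall>(U,\<phi>)\<in>A. openin X U \<and> open (\<phi> ` U) \<and>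
        homeomorphic_map (subtopology X U) (top_of_set (\<phi> ` U)) \<phi>) \<and>
     (\<forall>c\<in>A. \<forall>d\<in>A. transition c d holomorphic_on (snd c ` (fst c \<inter> fst d)))"

definition has_genus :: "'a topology \<Rightarrow> nat \<Rightarrow> bool" where
  "has_genus X g \<longleftrightarrow> homology_group 1 X \<cong> free_Abelian_group {..<2*g}"

definition dx :: "(complex \<Rightarrow> real) \<Rightarrow> complex \<Rightarrow> real" where
  "dx f z = deriv (\<lambda>t::real. f (z + complex_of_real t)) 0"
definition dy :: "(complex \<Rightarrow> real) \<Rightarrow> complex \<Rightarrow> real" where
  "dy f z = deriv (\<lambda>t::real. f (z + \<i> * complex_of_real t)) 0"
definition lap0 :: "(complex \<Rightarrow> real) \<Rightarrow> complex \<Rightarrow> real" where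
  "lap0 f z = dx (dx f) z + dy (dy f) z"

fun Ck :: "nat \<Rightarrow> complex set \<Rightarrow> (complex \<Rightarrow> real) \<Rightarrow> bool" where
  "Ck 0 S f = continuous_on S f"
| "Ck (Suc k) S f = ((\<forall>z\<in>S. f differentiable (at z)) \<and> Ck k S (dx f) \<and> Ck k S (dy f))"

definition smooth_on :: "complex set \<Rightarrow> (complex \<Rightarrow> real) \<Rightarrow> bool" where
  "smooth_on S f \<longleftrightarrow> (\<forall>k. Ck k S f)"

text \<open>A smooth conformal metric h: in the chart c it is rho c z |dz|^2.\<close>
definition conformal_metric :: "'a chart set \<Rightarrow> ('a chart \<Rightarrow> complex \<Rightarrow> real) \<Rightarrow> bool" where
  "conformal_metric A rho \<longleftrightarrow>
     (\<forall>c\<in>A. smooth_on (snd c ` fst c) (rho c) \<and> (\<forall>z\<in>snd c ` fst c. rho c z > 0)) \<and>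
     (\<forall>c\<in>A. \<forall>d\<in>A. \<forall>z\<in>snd c ` (fst c \<inter> fst d).
        rho c z = rho d (transition c d z) * (cmod (deriv (transition c d) z))\<^sup>2)"

text \<open>A holomorphic cubic differential: in the chart c it is U c z dz^3.\<close>
definition holo_cubic_diff :: "'a chart set \<Rightarrow> ('a chart \<Rightarrow> complex \<Rightarrow> complex) \<Rightarrow> bool" where
  "holo_cubic_diff A U \<longleftrightarrow>
     (\<forall>c\<in>A. U c holomorphic_on (snd c ` fst c)) \<and>
     (\<forall>c\<in>A. \<forall>d\<in>A. \<forall>z\<in>snd c ` (fst c \<inter> fst d).
        U c z = U d (transition c d z) * (deriv (transition c d) z) ^ 3)"

definition smooth_fun :: "'a chart set \<Rightarrow> ('a \<Rightarrow> real) \<Rightarrow> bool" where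
  "smooth_fun A u \<longleftrightarrow> (\<forall>c\<in>A. smooth_on (snd c ` fst c) (u \<circ> inv_into (fst c) (snd c)))"

definition laplacian :: "('a chart \<Rightarrow> complex \<Rightarrow> real) \<Rightarrow> 'a chart \<Rightarrow> ('a \<Rightarrow> real) \<Rightarrow> complex \<Rightarrow> real" where
  "laplacian rho c u z = lap0 (u \<circ> inv_into (fst c) (snd c)) z / rho c z"

definition gauss_curvature :: "('a chart \<Rightarrow> complex \<Rightarrow> real) \<Rightarrow> 'a chart \<Rightarrow> complex \<Rightarrow> real" where
  "gauss_curvature rho c z = - lap0 (\<lambda>w. ln (rho c w)) z / (2 * rho c z)"

definition cubic_norm2 :: "('a chart \<Rightarrow> complex \<Rightarrow> real) \<Rightarrow> ('a chart \<Rightarrow> complex \<Rightarrow> complex) \<Rightarrow> 'a chart \<Rightarrow> complex \<Rightarrow> real" where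
  "cubic_norm2 rho U c z = (cmod (U c z))\<^sup>2 / (rho c z) ^ 3"

definition solves_eq :: "'a chart set \<Rightarrow> ('a chart \<Rightarrow> complex \<Rightarrow> real) \<Rightarrow> ('a chart \<Rightarrow> complex \<Rightarrow> complex) \<Rightarrow> ('a \<Rightarrow> real) \<Rightarrow> bool" where
  "solves_eq A rho U u \<longleftrightarrow> smooth_fun A u \<and>
     (\<forall>c\<in>A. \<forall>p\<in>fst c. let z = snd c p in
        laplacian rho c u z + 4 * exp (-2 * u p) * cubic_norm2 rho U c z - 2 * exp (u p)
          - 2 * gauss_curvature rho c z = 0)"

end

theory Submission
  imports Defs
begin


lemma second_deriv_test:
  fixes h h' :: "real \<Rightarrow> real"
  assumes d: "d > 0" and mx: "\<And>t. \<bar>t\<bar> < d \<Longrightarrow> h t \<le> h 0"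
    and dh: "\<And>t. \<bar>t\<bar> < d \<Longrightarrow> (h has_real_derivative h' t) (at t)"
    and dh': "(h' has_real_derivative a) (at 0)"
  shows "a \<le> 0"
proof (rule ccontr)
  assume "\<not> a \<le> 0"
  hence a: "a > 0" by simp
  have h0: "h' 0 = 0"
    by (rule DERIV_local_max[OF dh[of 0] d]) (use d mx in auto)
  obtain d1 where d1: "d1 > 0" "\<And>t. t > 0 \<Longrightarrow> t < d1 \<Longrightarrow> h' 0 < h' (0 + t)"
    using DERIV_pos_inc_right[OF dh' a] by blast
  define t where "t = min d d1 / 2"
  have t: "t > 0" "t < d" "t < d1" using d d1 by (auto simp: t_def)
  obtain \<xi> where xi: "0 < \<xi>" "\<xi> < t" "h t - h 0 = (t - 0) * h' \<xi>"
    using MVT2[OF t(1), of h h'] dh t by force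
  have "h' \<xi> > 0" using d1(2)[of \<xi>] xi t h0 by simp
  hence "t * h' \<xi> > 0" using t by simp
  hence "h t > h 0" using xi(3) by simp
  moreover have "h t \<le> h 0" using mx t by simp
  ultimately show False by simp
qed

definition d2 :: "(complex \<Rightarrow> real) \<Rightarrow> complex \<Rightarrow> real \<Rightarrow> real \<Rightarrow> bool" where
  "d2 f z a b \<longleftrightarrow> (\<exists>e>0. \<exists>Dx Dy.
     (\<forall>s\<in>ball z e. ((\<lambda>t. f (s + complex_of_real t)) has_real_derivative Dx s) (at 0) \<and>
                   ((\<lambda>t. f (s + \<i> * complex_of_real t)) has_real_derivative Dy s) (at 0)) \<and>
     ((\<lambda>t. Dx (z + complex_of_real t)) has_real_derivative a) (at 0) \<and>
     ((\<lambda>t. Dy (z + \<i> * complex_of_real t)) has_real_derivative b) (at 0))"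

lemma d2_max:
  assumes "d2 f z a b" and "e0 > 0" and mx: "\<And>s. s \<in> ball z e0 \<Longrightarrow> f s \<le> f z"
  shows "a \<le> 0 \<and> b \<le> 0"
proof -
  obtain e Dx Dy where e: "e > 0"
    and D: "\<And>s. s\<in>ball z e \<Longrightarrow> ((\<lambda>t. f (s + complex_of_real t)) has_real_derivative Dx s) (at 0) \<and>
                   ((\<lambda>t. f (s + \<i> * complex_of_real t)) has_real_derivative Dy s) (at 0)"
    and Da: "((\<lambda>t. Dx (z + complex_of_real t)) has_real_derivative a) (at 0)"
    and Db: "((\<lambda>t. Dy (z + \<i> * complex_of_real t)) has_real_derivative b) (at 0)"
    using assms(1) unfolding d2_def by blast
  define d where "d = min e e0"
  have d: "d > 0" using e assms(2) by (simp add: d_def)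
  have "a \<le> 0"
  proof (rule second_deriv_test[OF d, of "\<lambda>t. f (z + complex_of_real t)" "\<lambda>t. Dx (z + complex_of_real t)"])
    fix t :: real assume t: "\<bar>t\<bar> < d"
    have sb: "z + complex_of_real t \<in> ball z e" "z + complex_of_real t \<in> ball z e0"
      using t by (auto simp: dist_norm d_def)
    show "f (z + complex_of_real t) \<le> f (z + complex_of_real 0)" using mx sb by simp
    have "((\<lambda>\<tau>. f ((z + complex_of_real t) + complex_of_real \<tau>)) has_real_derivative Dx (z + complex_of_real t)) (at 0)"
      using D[OF sb(1)] by blast
    hence "((\<lambda>\<tau>. f (z + complex_of_real (\<tau> + t))) has_real_derivative Dx (z + complex_of_real t)) (at 0)"
      by (simp add: add_ac)
    thus "((\<lambda>t. f (z + complex_of_real t)) has_real_derivative Dx (z + complex_of_real t)) (at t)"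
      using DERIV_shift[of "\<lambda>t. f (z + complex_of_real t)" "Dx (z + complex_of_real t)" 0 t] by simp
  next
    show "((\<lambda>t. Dx (z + complex_of_real t)) has_real_derivative a) (at 0)" by (rule Da)
  qed
  moreover have "b \<le> 0"
  proof (rule second_deriv_test[OF d, of "\<lambda>t. f (z + \<i> * complex_of_real t)" "\<lambda>t. Dy (z + \<i> * complex_of_real t)"])
    fix t :: real assume t: "\<bar>t\<bar> < d"
    have sb: "z + \<i> * complex_of_real t \<in> ball z e" "z + \<i> * complex_of_real t \<in> ball z e0"
      using t by (auto simp: dist_norm d_def norm_mult)
    show "f (z + \<i> * complex_of_real t) \<le> f (z + \<i> * complex_of_real 0)" using mx sb by simp
    have "((\<lambda>\<tau>. f ((z + \<i> * complex_of_real t) + \<i> * complex_of_real \<tau>)) has_real_derivative Dy (z + \<i> * complex_of_real t)) (at 0)"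
      using D[OF sb(1)] by blast
    hence "((\<lambda>\<tau>. f (z + \<i> * complex_of_real (\<tau> + t))) has_real_derivative Dy (z + \<i> * complex_of_real t)) (at 0)"
      by (simp add: algebra_simps)
    thus "((\<lambda>t. f (z + \<i> * complex_of_real t)) has_real_derivative Dy (z + \<i> * complex_of_real t)) (at t)"
      using DERIV_shift[of "\<lambda>t. f (z + \<i> * complex_of_real t)" "Dy (z + \<i> * complex_of_real t)" 0 t] by simp
  next
    show "((\<lambda>t. Dy (z + \<i> * complex_of_real t)) has_real_derivative b) (at 0)" by (rule Db)
  qed
  ultimately show ?thesis by simp
qed

lemma d2_intro:
  assumes "e > 0"
    and "\<And>s. s\<in>ball z e \<Longrightarrow> ((\<lambda>t. f (s + complex_of_real t)) has_real_derivative Dx s) (at 0)"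
    and "\<And>s. s\<in>ball z e \<Longrightarrow> ((\<lambda>t. f (s + \<i> * complex_of_real t)) has_real_derivative Dy s) (at 0)"
    and "((\<lambda>t. Dx (z + complex_of_real t)) has_real_derivative a) (at 0)"
    and "((\<lambda>t. Dy (z + \<i> * complex_of_real t)) has_real_derivative b) (at 0)"
  shows "d2 f z a b"
  unfolding d2_def using assms by blast

lemma d2_elim:
  assumes "d2 f z a b"
  obtains e Dx Dy where "e > 0"
    "\<And>s. s\<in>ball z e \<Longrightarrow> ((\<lambda>t. f (s + complex_of_real t)) has_real_derivative Dx s) (at 0)"
    "\<And>s. s\<in>ball z e \<Longrightarrow> ((\<lambda>t. f (s + \<i> * complex_of_real t)) has_real_derivative Dy s) (at 0)"
    "((\<lambda>t. Dx (z + complex_of_real t)) has_real_derivative a) (at 0)"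
    "((\<lambda>t. Dy (z + \<i> * complex_of_real t)) has_real_derivative b) (at 0)"
  using assms unfolding d2_def by blast

lemma d2_add:
  assumes "d2 f z a b" "d2 g z c d"
  shows "d2 (\<lambda>s. f s + g s) z (a + c) (b + d)"
proof -
  obtain e1 Dx1 Dy1 where 1: "e1 > 0"
    "\<And>s. s\<in>ball z e1 \<Longrightarrow> ((\<lambda>t. f (s + complex_of_real t)) has_real_derivative Dx1 s) (at 0)"
    "\<And>s. s\<in>ball z e1 \<Longrightarrow> ((\<lambda>t. f (s + \<i> * complex_of_real t)) has_real_derivative Dy1 s) (at 0)"
    "((\<lambda>t. Dx1 (z + complex_of_real t)) has_real_derivative a) (at 0)"
    "((\<lambda>t. Dy1 (z + \<i> * complex_of_real t)) has_real_derivative b) (at 0)"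
    using d2_elim[OF assms(1)] by blast
  obtain e2 Dx2 Dy2 where 2: "e2 > 0"
    "\<And>s. s\<in>ball z e2 \<Longrightarrow> ((\<lambda>t. g (s + complex_of_real t)) has_real_derivative Dx2 s) (at 0)"
    "\<And>s. s\<in>ball z e2 \<Longrightarrow> ((\<lambda>t. g (s + \<i> * complex_of_real t)) has_real_derivative Dy2 s) (at 0)"
    "((\<lambda>t. Dx2 (z + complex_of_real t)) has_real_derivative c) (at 0)"
    "((\<lambda>t. Dy2 (z + \<i> * complex_of_real t)) has_real_derivative d) (at 0)"
    using d2_elim[OF assms(2)] by blast
  show ?thesis
    apply (rule d2_intro[of "min e1 e2" _ _ "\<lambda>s. Dx1 s + Dx2 s" "\<lambda>s. Dy1 s + Dy2 s"])
    using 1 2 by (auto intro!: DERIV_add)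
qed

lemma d2_cmult:
  assumes "d2 f z a b"
  shows "d2 (\<lambda>s. k * f s) z (k * a) (k * b)"
proof -
  obtain e1 Dx1 Dy1 where 1: "e1 > 0"
    "\<And>s. s\<in>ball z e1 \<Longrightarrow> ((\<lambda>t. f (s + complex_of_real t)) has_real_derivative Dx1 s) (at 0)"
    "\<And>s. s\<in>ball z e1 \<Longrightarrow> ((\<lambda>t. f (s + \<i> * complex_of_real t)) has_real_derivative Dy1 s) (at 0)"
    "((\<lambda>t. Dx1 (z + complex_of_real t)) has_real_derivative a) (at 0)"
    "((\<lambda>t. Dy1 (z + \<i> * complex_of_real t)) has_real_derivative b) (at 0)"
    using d2_elim[OF assms(1)] by blast
  show ?thesis
    apply (rule d2_intro[of e1 _ _ "\<lambda>s. k * Dx1 s" "\<lambda>s. k * Dy1 s"])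
    using 1 by (auto intro!: DERIV_cmult)
qed

lemma d2_const: "d2 (\<lambda>s. k) z 0 0"
  by (rule d2_intro[of 1 _ _ "\<lambda>s. 0" "\<lambda>s. 0"]) auto

lemma d2_diff:
  assumes "d2 f z a b" "d2 g z c d"
  shows "d2 (\<lambda>s. f s - g s) z (a - c) (b - d)"
  using d2_add[OF assms(1) d2_cmult[OF assms(2), of "-1"]] by simp

lemma d2_transfer:
  assumes "d2 f z a b" "e0 > 0" "\<And>s. s \<in> ball z e0 \<Longrightarrow> g s = f s"
  shows "d2 g z a b"
proof -
  obtain e1 Dx1 Dy1 where 1: "e1 > 0"
    "\<And>s. s\<in>ball z e1 \<Longrightarrow> ((\<lambda>t. f (s + complex_of_real t)) has_real_derivative Dx1 s) (at 0)"
    "\<And>s. s\<in>ball z e1 \<Longrightarrow> ((\<lambda>t. f (s + \<i> * complex_of_real t)) has_real_derivative Dy1 s) (at 0)"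
    "((\<lambda>t. Dx1 (z + complex_of_real t)) has_real_derivative a) (at 0)"
    "((\<lambda>t. Dy1 (z + \<i> * complex_of_real t)) has_real_derivative b) (at 0)"
    using d2_elim[OF assms(1)] by blast
  define e where "e = min e1 e0 / 2"
  have e: "e > 0" "e < e1" "e < e0" using 1(1) assms(2) by (auto simp: e_def)
  show ?thesis
  proof (rule d2_intro[OF e(1) _ _ 1(4) 1(5)])
    fix s assume s: "s \<in> ball z e"
    have ev1: "\<forall>\<^sub>F t in nhds 0. g (s + complex_of_real t) = f (s + complex_of_real t)"
    proof -
      have "\<forall>\<^sub>F t in nhds (0::real). t \<in> ball 0 (e0 - dist z s)"
        using s e by (intro eventually_nhds_in_open) (auto simp: dist_commute)
      thus ?thesis
      proof eventually_elim
        case (elim t)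
        have "dist z (s + complex_of_real t) \<le> dist z s + dist s (s + complex_of_real t)"
          by (rule dist_triangle)
        also have "dist s (s + complex_of_real t) = \<bar>t\<bar>" by (simp add: dist_norm)
        finally show ?case using elim by (intro assms(3)) (auto simp: dist_commute)
      qed
    qed
    have ev2: "\<forall>\<^sub>F t in nhds 0. g (s + \<i> * complex_of_real t) = f (s + \<i> * complex_of_real t)"
    proof -
      have "\<forall>\<^sub>F t in nhds (0::real). t \<in> ball 0 (e0 - dist z s)"
        using s e by (intro eventually_nhds_in_open) (auto simp: dist_commute)
      thus ?thesis
      proof eventually_elim
        case (elim t)
        have "dist z (s + \<i> * complex_of_real t) \<le> dist z s + dist s (s + \<i> * complex_of_real t)"
          by (rule dist_triangle)
        also have "dist s (s + \<i> * complex_of_real t) = \<bar>t\<bar>" by (simp add: dist_norm norm_mult)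
        finally show ?case using elim by (intro assms(3)) (auto simp: dist_commute)
      qed
    qed
    have sb: "s \<in> ball z e1" using s e by auto
    show "((\<lambda>t. g (s + complex_of_real t)) has_real_derivative Dx1 s) (at 0)"
      using 1(2)[OF sb] DERIV_cong_ev[OF refl ev1 refl] by simp
    show "((\<lambda>t. g (s + \<i> * complex_of_real t)) has_real_derivative Dy1 s) (at 0)"
      using 1(3)[OF sb] DERIV_cong_ev[OF refl ev2 refl] by simp
  qed
qed

lemma d2_first:
  assumes "d2 f z a b"
  shows "((\<lambda>t. f (z + complex_of_real t)) has_real_derivative dx f z) (at 0)"
    "((\<lambda>t. f (z + \<i> * complex_of_real t)) has_real_derivative dy f z) (at 0)"
proof -
  obtain e1 Dx1 Dy1 where 1: "e1 > 0"
    "\<And>s. s\<in>ball z e1 \<Longrightarrow> ((\<lambda>t. f (s + complex_of_real t)) has_real_derivative Dx1 s) (at 0)"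
    "\<And>s. s\<in>ball z e1 \<Longrightarrow> ((\<lambda>t. f (s + \<i> * complex_of_real t)) has_real_derivative Dy1 s) (at 0)"
    using d2_elim[OF assms(1)] by metis
  have z: "z \<in> ball z e1" using 1 by simp
  show "((\<lambda>t. f (z + complex_of_real t)) has_real_derivative dx f z) (at 0)"
    using 1(2)[OF z] DERIV_imp_deriv[OF 1(2)[OF z]] by (simp add: dx_def)
  show "((\<lambda>t. f (z + \<i> * complex_of_real t)) has_real_derivative dy f z) (at 0)"
    using 1(3)[OF z] DERIV_imp_deriv[OF 1(3)[OF z]] by (simp add: dy_def)
qed

lemma d2_values:
  assumes "d2 f z a b"
  shows "dx (dx f) z = a" "dy (dy f) z = b"
proof -
  obtain e1 Dx1 Dy1 where 1: "e1 > 0"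
    "\<And>s. s\<in>ball z e1 \<Longrightarrow> ((\<lambda>t. f (s + complex_of_real t)) has_real_derivative Dx1 s) (at 0)"
    "\<And>s. s\<in>ball z e1 \<Longrightarrow> ((\<lambda>t. f (s + \<i> * complex_of_real t)) has_real_derivative Dy1 s) (at 0)"
    "((\<lambda>t. Dx1 (z + complex_of_real t)) has_real_derivative a) (at 0)"
    "((\<lambda>t. Dy1 (z + \<i> * complex_of_real t)) has_real_derivative b) (at 0)"
    using d2_elim[OF assms(1)] by blast
  have dxe: "dx f s = Dx1 s" if "s \<in> ball z e1" for s
    using DERIV_imp_deriv[OF 1(2)[OF that]] by (simp add: dx_def)
  have dye: "dy f s = Dy1 s" if "s \<in> ball z e1" for s
    using DERIV_imp_deriv[OF 1(3)[OF that]] by (simp add: dy_def)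
  have ev: "\<forall>\<^sub>F t in nhds (0::real). t \<in> ball 0 e1"
    using 1(1) by (intro eventually_nhds_in_open) auto
  have ev1: "\<forall>\<^sub>F t in nhds 0. dx f (z + complex_of_real t) = Dx1 (z + complex_of_real t)"
    using ev by eventually_elim (auto intro!: dxe simp: dist_norm)
  have ev2: "\<forall>\<^sub>F t in nhds 0. dy f (z + \<i> * complex_of_real t) = Dy1 (z + \<i> * complex_of_real t)"
    using ev by eventually_elim (auto intro!: dye simp: dist_norm norm_mult)
  have "((\<lambda>t. dx f (z + complex_of_real t)) has_real_derivative a) (at 0)"
    using 1(4) DERIV_cong_ev[OF refl ev1 refl] by simp
  thus "dx (dx f) z = a" using DERIV_imp_deriv by (simp add: dx_def[of "dx f"])
  have "((\<lambda>t. dy f (z + \<i> * complex_of_real t)) has_real_derivative b) (at 0)"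
    using 1(5) DERIV_cong_ev[OF refl ev2 refl] by simp
  thus "dy (dy f) z = b" using DERIV_imp_deriv by (simp add: dy_def[of "dy f"])
qed

lemma d2_ln:
  assumes "d2 f z a b" "e0 > 0" "\<And>s. s \<in> ball z e0 \<Longrightarrow> f s > 0"
  shows "d2 (\<lambda>s. ln (f s)) z ((a * f z - dx f z * dx f z) / (f z * f z))
                             ((b * f z - dy f z * dy f z) / (f z * f z))"
proof -
  obtain e1 Dx1 Dy1 where 1: "e1 > 0"
    "\<And>s. s\<in>ball z e1 \<Longrightarrow> ((\<lambda>t. f (s + complex_of_real t)) has_real_derivative Dx1 s) (at 0)"
    "\<And>s. s\<in>ball z e1 \<Longrightarrow> ((\<lambda>t. f (s + \<i> * complex_of_real t)) has_real_derivative Dy1 s) (at 0)"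
    "((\<lambda>t. Dx1 (z + complex_of_real t)) has_real_derivative a) (at 0)"
    "((\<lambda>t. Dy1 (z + \<i> * complex_of_real t)) has_real_derivative b) (at 0)"
    using d2_elim[OF assms(1)] by blast
  have z1: "z \<in> ball z e1" using 1 by simp
  have dxz: "Dx1 z = dx f z"
    using DERIV_imp_deriv[OF 1(2)[OF z1]] by (simp add: dx_def)
  have dyz: "Dy1 z = dy f z"
    using DERIV_imp_deriv[OF 1(3)[OF z1]] by (simp add: dy_def)
  have fz: "f z > 0" using assms by simp
  show ?thesis
  proof (rule d2_intro[of "min e1 e0" _ _ "\<lambda>s. Dx1 s / f s" "\<lambda>s. Dy1 s / f s"])
    show "min e1 e0 > 0" using 1 assms by simp
  next
    fix s assume s: "s \<in> ball z (min e1 e0)"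
    have fs: "f s > 0" using s assms by simp
    show "((\<lambda>t. ln (f (s + complex_of_real t))) has_real_derivative Dx1 s / f s) (at 0)"
    proof -
      have D: "((\<lambda>t. f (s + complex_of_real t)) has_real_derivative Dx1 s) (at 0)" using 1(2) s by simp
      have "((\<lambda>t. ln (f (s + complex_of_real t))) has_real_derivative inverse (f s) * Dx1 s) (at 0)"
        by (rule DERIV_chain2[where f=ln and g="\<lambda>t. f (s + complex_of_real t)", OF _ D]) (use fs in \<open>simp add: DERIV_ln\<close>)
      thus ?thesis by (simp add: divide_inverse mult.commute)
    qed
    show "((\<lambda>t. ln (f (s + \<i> * complex_of_real t))) has_real_derivative Dy1 s / f s) (at 0)"
    proof -
      have D: "((\<lambda>t. f (s + \<i> * complex_of_real t)) has_real_derivative Dy1 s) (at 0)" using 1(3) s by simp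
      have "((\<lambda>t. ln (f (s + \<i> * complex_of_real t))) has_real_derivative inverse (f s) * Dy1 s) (at 0)"
        by (rule DERIV_chain2[where f=ln and g="\<lambda>t. f (s + \<i> * complex_of_real t)", OF _ D]) (use fs in \<open>simp add: DERIV_ln\<close>)
      thus ?thesis by (simp add: divide_inverse mult.commute)
    qed
  next
    show "((\<lambda>t. Dx1 (z + complex_of_real t) / f (z + complex_of_real t)) has_real_derivative
      (a * f z - dx f z * dx f z) / (f z * f z)) (at 0)"
      using DERIV_divide[OF 1(4) d2_first(1)[OF assms(1)]] fz dxz by simp
    show "((\<lambda>t. Dy1 (z + \<i> * complex_of_real t) / f (z + \<i> * complex_of_real t)) has_real_derivative
      (b * f z - dy f z * dy f z) / (f z * f z)) (at 0)"
      using DERIV_divide[OF 1(5) d2_first(2)[OF assms(1)]] fz dyz by simp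
  qed
qed

lemma line_deriv_x:
  assumes "g differentiable (at s)"
  shows "((\<lambda>t. g (s + complex_of_real t)) has_real_derivative dx g s) (at 0)"
proof -
  have "(\<lambda>t. s + complex_of_real t) differentiable (at (0::real))"
    by (intro derivative_intros)
  hence "(g \<circ> (\<lambda>t. s + complex_of_real t)) differentiable (at 0)"
    using differentiable_chain_at[of "\<lambda>t. s + complex_of_real t" 0 g] assms by simp
  hence "(\<lambda>t. g (s + complex_of_real t)) differentiable (at 0)" by (simp add: o_def)
  thus ?thesis using DERIV_deriv_iff_real_differentiable by (simp add: dx_def)
qed

lemma line_deriv_y:
  assumes "g differentiable (at s)"
  shows "((\<lambda>t. g (s + \<i> * complex_of_real t)) has_real_derivative dy g s) (at 0)"
proof -
  have "(\<lambda>t. s + \<i> * complex_of_real t) differentiable (at (0::real))"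
    by (intro derivative_intros)
  hence "(g \<circ> (\<lambda>t. s + \<i> * complex_of_real t)) differentiable (at 0)"
    using differentiable_chain_at[of "\<lambda>t. s + \<i> * complex_of_real t" 0 g] assms by simp
  hence "(\<lambda>t. g (s + \<i> * complex_of_real t)) differentiable (at 0)" by (simp add: o_def)
  thus ?thesis using DERIV_deriv_iff_real_differentiable by (simp add: dy_def)
qed

lemma d2_smooth:
  assumes "Ck 2 S f" "open S" "z \<in> S"
  shows "d2 f z (dx (dx f) z) (dy (dy f) z)"
proof -
  have C: "\<forall>z\<in>S. f differentiable (at z)" "\<forall>z\<in>S. dx f differentiable (at z)"
    "\<forall>z\<in>S. dy f differentiable (at z)"
    using assms(1) by (simp_all add: numeral_2_eq_2)
  obtain e where e: "e > 0" "ball z e \<subseteq> S" using assms(2,3) open_contains_ball by blast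
  show ?thesis
    by (rule d2_intro[OF e(1), of _ _ "dx f" "dy f"])
       (use e C assms(3) in \<open>auto intro!: line_deriv_x line_deriv_y\<close>)
qed

lemma hline:
  assumes "g holomorphic_on S" "open S" "s \<in> S"
  shows "((\<lambda>t. Re (c * g (s + complex_of_real t * v))) has_real_derivative Re (c * v * deriv g s)) (at 0)"
proof -
  have G: "((\<lambda>w. c * g w) has_field_derivative c * deriv g s) (at s)"
    using holomorphic_derivI[OF assms] by (auto intro!: derivative_eq_intros)
  have L: "((\<lambda>t. s + complex_of_real t * v) has_vector_derivative v) (at 0)"
    by (auto intro!: derivative_eq_intros simp: has_vector_derivative_def scaleR_conv_of_real)
  have "((\<lambda>w. c * g w) \<circ> (\<lambda>t. s + complex_of_real t * v) has_vector_derivative v * (c * deriv g s)) (at 0)"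
    by (rule field_vector_diff_chain_at[OF L]) (use G in simp)
  hence "((\<lambda>t. c * g (s + complex_of_real t * v)) has_derivative (\<lambda>h. h *\<^sub>R (v * (c * deriv g s)))) (at 0)"
    by (simp add: has_vector_derivative_def o_def)
  hence "((\<lambda>t. Re (c * g (s + complex_of_real t * v))) has_derivative (\<lambda>h. Re (h *\<^sub>R (v * (c * deriv g s))))) (at 0)"
    by (rule has_derivative_Re)
  moreover have "(\<lambda>h. Re (h *\<^sub>R (v * (c * deriv g s)))) = (*) (Re (c * v * deriv g s))"
    by (auto simp: fun_eq_iff algebra_simps)
  ultimately show ?thesis by (simp add: has_field_derivative_def)
qed

lemma d2_Re_holo:
  assumes "g holomorphic_on S" "open S" "z \<in> S"
  shows "d2 (\<lambda>s. Re (g s)) z (Re (deriv (deriv g) z)) (- Re (deriv (deriv g) z))"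
proof -
  obtain e where e: "e > 0" "ball z e \<subseteq> S" using assms(2,3) open_contains_ball by blast
  have g': "deriv g holomorphic_on S" using assms(1,2) by (rule holomorphic_deriv)
  show ?thesis
  proof (rule d2_intro[OF e(1), of _ _ "\<lambda>s. Re (deriv g s)" "\<lambda>s. Re (\<i> * deriv g s)"])
    fix s assume s: "s \<in> ball z e"
    show "((\<lambda>t. Re (g (s + complex_of_real t))) has_real_derivative Re (deriv g s)) (at 0)"
      using hline[OF assms(1,2), of s 1 1] s e by auto
    show "((\<lambda>t. Re (g (s + \<i> * complex_of_real t))) has_real_derivative Re (\<i> * deriv g s)) (at 0)"
      using hline[OF assms(1,2), of s 1 \<i>] s e by (auto simp: mult.commute)
  next
    show "((\<lambda>t. Re (deriv g (z + complex_of_real t))) has_real_derivative Re (deriv (deriv g) z)) (at 0)"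
      using hline[OF g' assms(2,3), of 1 1] by auto
    show "((\<lambda>t. Re (\<i> * deriv g (z + \<i> * complex_of_real t))) has_real_derivative - Re (deriv (deriv g) z)) (at 0)"
      using hline[OF g' assms(2,3), of \<i> \<i>] by (auto simp: mult.commute)
  qed
qed

lemma cmod_sq_split: "(cmod w)\<^sup>2 = (Re w)\<^sup>2 + (Im w)\<^sup>2"
  by (simp add: cmod_power2)

lemma d2_quad:
  "d2 (\<lambda>s. R\<^sup>2 - (cmod (s - z0))\<^sup>2) z (-2) (-2)"
proof (rule d2_intro[of 1 _ _ "\<lambda>s. -2 * (Re s - Re z0)" "\<lambda>s. -2 * (Im s - Im z0)"])
  fix s :: complex
  have e1: "(\<lambda>t. R\<^sup>2 - (cmod (s + complex_of_real t - z0))\<^sup>2) = (\<lambda>t. R\<^sup>2 - ((Re s + t - Re z0)\<^sup>2 + (Im s - Im z0)\<^sup>2))"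
    by (simp add: cmod_sq_split)
  show "((\<lambda>t. R\<^sup>2 - (cmod (s + complex_of_real t - z0))\<^sup>2) has_real_derivative -2 * (Re s - Re z0)) (at 0)"
    unfolding e1 by (auto intro!: derivative_eq_intros)
  have e2: "(\<lambda>t. R\<^sup>2 - (cmod (s + \<i> * complex_of_real t - z0))\<^sup>2) = (\<lambda>t. R\<^sup>2 - ((Re s - Re z0)\<^sup>2 + (Im s + t - Im z0)\<^sup>2))"
    by (simp add: cmod_sq_split)
  show "((\<lambda>t. R\<^sup>2 - (cmod (s + \<i> * complex_of_real t - z0))\<^sup>2) has_real_derivative -2 * (Im s - Im z0)) (at 0)"
    unfolding e2 by (auto intro!: derivative_eq_intros)
next
  show "((\<lambda>t. -2 * (Re (z + complex_of_real t) - Re z0)) has_real_derivative -2) (at 0)"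
    by (auto intro!: derivative_eq_intros)
  show "((\<lambda>t. -2 * (Im (z + \<i> * complex_of_real t) - Im z0)) has_real_derivative -2) (at 0)"
    by (auto intro!: derivative_eq_intros)
qed simp

lemma d2_barrier:
  assumes "cmod (z - z0) < R"
  shows "\<exists>a b. d2 (\<lambda>s. 3 * ln B - 6 * ln (R\<^sup>2 - (cmod (s - z0))\<^sup>2)) z a b \<and>
              a + b = 24 * R\<^sup>2 / (R\<^sup>2 - (cmod (z - z0))\<^sup>2)\<^sup>2"
proof -
  define p where "p = (\<lambda>s. R\<^sup>2 - (cmod (s - z0))\<^sup>2)"
  have R: "R > 0" using assms by (smt (verit) norm_ge_zero)
  define e where "e = R - cmod (z - z0)"
  have e: "e > 0" using assms by (simp add: e_def)
  have pos: "p s > 0" if "s \<in> ball z e" for s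
  proof -
    have "cmod (s - z0) \<le> cmod (s - z) + cmod (z - z0)"
      using norm_triangle_ineq[of "s - z" "z - z0"] by simp
    also have "cmod (s - z) < e" using that by (simp add: dist_norm norm_minus_commute)
    finally have "cmod (s - z0) < R" by (simp add: e_def)
    hence "(cmod (s - z0))\<^sup>2 < R\<^sup>2" by (simp add: power_strict_mono)
    thus ?thesis by (simp add: p_def)
  qed
  have dq: "d2 p z (-2) (-2)" unfolding p_def by (rule d2_quad)
  have dxp: "dx p z = -2 * (Re z - Re z0)"
  proof -
    have "((\<lambda>t. p (z + complex_of_real t)) has_real_derivative -2 * (Re z - Re z0)) (at 0)"
      unfolding p_def by (simp add: cmod_sq_split) (auto intro!: derivative_eq_intros)
    thus ?thesis using DERIV_unique[OF d2_first(1)[OF dq]] by simp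
  qed
  have dyp: "dy p z = -2 * (Im z - Im z0)"
  proof -
    have "((\<lambda>t. p (z + \<i> * complex_of_real t)) has_real_derivative -2 * (Im z - Im z0)) (at 0)"
      unfolding p_def by (simp add: cmod_sq_split) (auto intro!: derivative_eq_intros)
    thus ?thesis using DERIV_unique[OF d2_first(2)[OF dq]] by simp
  qed
  have dl: "d2 (\<lambda>s. ln (p s)) z ((-2 * p z - dx p z * dx p z) / (p z * p z))
                             ((-2 * p z - dy p z * dy p z) / (p z * p z))"
    using d2_ln[OF dq e pos] by simp
  have dw: "d2 (\<lambda>s. 3 * ln B - 6 * ln (p s)) z (0 - 6 * ((-2 * p z - dx p z * dx p z) / (p z * p z)))
                             (0 - 6 * ((-2 * p z - dy p z * dy p z) / (p z * p z)))"
    by (rule d2_diff[OF d2_const d2_cmult[OF dl]])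
  have pz: "p z > 0" using pos e by simp
  have "(0 - 6 * ((-2 * p z - dx p z * dx p z) / (p z * p z))) + (0 - 6 * ((-2 * p z - dy p z * dy p z) / (p z * p z)))
        = (24 * p z + 6 * (dx p z * dx p z + dy p z * dy p z)) / (p z * p z)"
    using pz by (simp add: field_simps)
  also have "dx p z * dx p z + dy p z * dy p z = 4 * (cmod (z - z0))\<^sup>2"
    unfolding dxp dyp cmod_sq_split by (simp add: power2_eq_square algebra_simps)
  also have "(24 * p z + 6 * (4 * (cmod (z - z0))\<^sup>2)) / (p z * p z) = 24 * R\<^sup>2 / (p z)\<^sup>2"
    using pz by (simp add: p_def field_simps power2_eq_square)
  finally show ?thesis using dw unfolding p_def by blast
qed



lemma exp_m2: "exp (-2 * (x::real)) = 1 / (exp x)^2"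
proof -
  have "exp (2*x) = exp x ^ 2" by (metis exp_of_nat_mult of_nat_numeral)
  thus ?thesis by (simp add: exp_minus divide_inverse)
qed

lemma exp_m3: "exp (-3 * (x::real)) = 1 / (exp x)^3"
proof -
  have "exp (3*x) = exp x ^ 3" by (metis exp_of_nat_mult of_nat_numeral)
  thus ?thesis by (simp add: exp_minus divide_inverse)
qed

lemma KPd2:
  fixes f r :: "complex \<Rightarrow> real" and V :: "complex \<Rightarrow> complex"
  assumes S: "open S" "z \<in> S" and f: "Ck 2 S f" and r: "Ck 2 S r" "\<And>s. s \<in> S \<Longrightarrow> r s > 0"
    and V: "V holomorphic_on S" "V z \<noteq> 0"
    and eq: "lap0 f z + lap0 (\<lambda>w. ln (r w)) z =
             2 * r z * exp (f z) - 4 * exp (-2 * f z) * lam\<^sup>2 * (cmod (V z))\<^sup>2 / (r z)\<^sup>2"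
  shows "\<exists>qa qb. d2 (\<lambda>s. 3 * f s + 3 * ln (r s) - ln ((cmod (V s))\<^sup>2)) z qa qb \<and>
           qa + qb = 6 * (r z * exp (f z)) * (1 - 2 * (lam\<^sup>2 * (cmod (V z))\<^sup>2 / (r z)^3 * exp (-3 * f z)))"
proof -
  obtain e0 where e0: "e0 > 0" "ball z e0 \<subseteq> S" using S open_contains_ball by blast
  have "continuous (at z) V"
    using V(1) S holomorphic_on_imp_continuous_on continuous_on_eq_continuous_at by blast
  then obtain e1 where e1: "e1 > 0" "\<And>y. dist z y < e1 \<Longrightarrow> V y \<noteq> 0"
    using continuous_at_avoid[of z V 0] V(2) by blast
  define e where "e = min e0 e1"
  have e: "e > 0" "ball z e \<subseteq> S" "\<And>s. s \<in> ball z e \<Longrightarrow> V s \<noteq> 0"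
    using e0 e1 by (auto simp: e_def)
  obtain g where g: "g holomorphic_on ball z e" "\<And>s. s \<in> ball z e \<Longrightarrow> V s = exp (g s)"
    using contractible_imp_holomorphic_log[of V "ball z e"] holomorphic_on_subset[OF V(1) e(2)]
      convex_imp_contractible[OF convex_ball] e(3) by metis
  have lnV: "ln ((cmod (V s))\<^sup>2) = 2 * Re (g s)" if "s \<in> ball z e" for s
    using g(2)[OF that] by (simp add: norm_exp_eq_Re ln_realpow[symmetric] exp_of_nat_mult[symmetric] power_commutes)
  have zb: "z \<in> ball z e" using e by simp
  have df: "d2 f z (dx (dx f) z) (dy (dy f) z)" by (rule d2_smooth[OF f S])
  have dr: "d2 r z (dx (dx r) z) (dy (dy r) z)" by (rule d2_smooth[OF r(1) S])
  obtain a1 b1 where dlr: "d2 (\<lambda>s. ln (r s)) z a1 b1"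
    using d2_ln[OF dr e0(1)] r(2) e0(2) by blast
  have lr: "lap0 (\<lambda>w. ln (r w)) z = a1 + b1"
    using d2_values[OF dlr] by (simp add: lap0_def)
  have lf: "lap0 f z = dx (dx f) z + dy (dy f) z" by (simp add: lap0_def)
  have dg: "d2 (\<lambda>s. Re (g s)) z (Re (deriv (deriv g) z)) (- Re (deriv (deriv g) z))"
    by (rule d2_Re_holo[OF g(1) open_ball zb])
  have dQ: "d2 (\<lambda>s. 3 * f s + 3 * ln (r s) - 2 * Re (g s)) z
     (3 * dx (dx f) z + 3 * a1 - 2 * Re (deriv (deriv g) z)) (3 * dy (dy f) z + 3 * b1 - 2 * (- Re (deriv (deriv g) z)))"
    by (rule d2_diff[OF d2_add[OF d2_cmult[OF df] d2_cmult[OF dlr]] d2_cmult[OF dg]])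
  have dQ': "d2 (\<lambda>s. 3 * f s + 3 * ln (r s) - ln ((cmod (V s))\<^sup>2)) z
     (3 * dx (dx f) z + 3 * a1 - 2 * Re (deriv (deriv g) z)) (3 * dy (dy f) z + 3 * b1 - 2 * (- Re (deriv (deriv g) z)))"
    by (rule d2_transfer[OF dQ e(1)]) (simp add: lnV)
  have rz: "r z > 0" using r(2) S by simp
  have "(3 * dx (dx f) z + 3 * a1 - 2 * Re (deriv (deriv g) z)) + (3 * dy (dy f) z + 3 * b1 - 2 * (- Re (deriv (deriv g) z)))
      = 3 * (lap0 f z + lap0 (\<lambda>w. ln (r w)) z)" by (simp add: lf lr algebra_simps)
  also have "\<dots> = 6 * (r z * exp (f z)) * (1 - 2 * (lam\<^sup>2 * (cmod (V z))\<^sup>2 / (r z)^3 * exp (-3 * f z)))"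
    unfolding eq exp_m2 exp_m3 using rz by (simp add: field_simps power2_eq_square power3_eq_cube)
  finally show ?thesis using dQ' by blast
qed



lemma Ck2_cont:
  assumes "Ck 2 S f" shows "continuous_on S f"
proof -
  have "\<forall>z\<in>S. f differentiable (at z)" using assms by (simp add: numeral_2_eq_2)
  thus ?thesis by (intro continuous_at_imp_continuous_on) (auto intro: differentiable_imp_continuous_within)
qed

lemma cube_root_cube: "(x::real) > 0 \<Longrightarrow> (x powr (1/3)) ^ 3 = x"
proof -
  assume x: "x > 0"
  have "(x powr (1/3)) ^ 3 = (x powr (1/3)) powr (real 3)"
    using x by (subst powr_realpow) auto
  also have "\<dots> = x" using x by (simp add: powr_powr)
  finally show ?thesis .
qed

lemma Qexp:
  assumes "(r::real) > 0" "c > 0"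
  shows "exp (3 * f + 3 * ln r - ln c) = (r * exp f)^3 / c"
proof -
  have "exp (3 * f + 3 * ln r - ln c) = exp (3*f) * exp (3 * ln r) / exp (ln c)"
    by (simp add: exp_add exp_diff)
  also have "exp (3*f) = (exp f)^3" by (metis exp_of_nat_mult of_nat_numeral)
  also have "exp (3 * ln r) = (exp (ln r))^3" by (metis exp_of_nat_mult of_nat_numeral)
  finally show ?thesis using assms by (simp add: power_mult_distrib mult.commute)
qed

lemma alg_contra:
  fixes E k0 B s R v w :: real
  assumes E: "E \<ge> k0 * exp (v/3)" and k0: "k0 > 0" and B: "B = 4 * R\<^sup>2 / k0 + R^4"
    and s: "s > 0" "s \<le> R\<^sup>2" and w: "w = 3 * ln B - 6 * ln s" and vw: "v > w" and R: "R > 0"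
  shows "6 * E * (1 - exp (- v)) > 24 * R\<^sup>2 / s\<^sup>2"
proof -
  have Bpos: "B > 0" using B k0 R by (simp add: add_pos_pos)
  have ew: "exp (w/3) = B / s\<^sup>2"
  proof -
    have "w/3 = ln B - 2 * ln s" using w by simp
    hence "exp (w/3) = exp (ln B - 2 * ln s)" by simp
    also have "\<dots> = exp (ln B) / exp (2 * ln s)" by (rule exp_diff)
    also have "exp (2 * ln s) = (exp (ln s))^2" by (metis exp_of_nat_mult of_nat_numeral)
    finally show ?thesis using Bpos s by simp
  qed
  have "B / s\<^sup>2 \<ge> B / R^4"
  proof -
    have "s\<^sup>2 \<le> (R\<^sup>2)\<^sup>2" by (rule power_mono) (use s in auto)
    also have "(R\<^sup>2)\<^sup>2 = R^4" by simp
    finally have "s\<^sup>2 \<le> R^4" .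
    thus ?thesis using Bpos s R by (intro divide_left_mono) auto
  qed
  moreover have "B / R^4 > 1"
  proof -
    have "4 * R\<^sup>2 / k0 > 0" using k0 R by simp
    hence "B > R^4" using B by simp
    thus ?thesis using R by simp
  qed
  ultimately have "exp (w/3) > 1" using ew by simp
  hence w0: "w > 0" by simp
  hence v0: "v > 0" using vw by simp
  have p1: "1 - exp (- v) > 0" using v0 by simp
  have A1: "6 * E * (1 - exp (- v)) \<ge> 6 * (k0 * exp (v/3)) * (1 - exp (- v))"
    using E p1 by (intro mult_right_mono) auto
  have idd: "exp (v/3) * (1 - exp (- v)) = exp (v/3) - exp (-2 * v / 3)"
    by (simp add: algebra_simps exp_add[symmetric])
  have "exp (-2 * v / 3) \<le> 1" using v0 by simp
  hence A2: "exp (v/3) * (1 - exp (- v)) \<ge> exp (v/3) - 1" using idd by simp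
  have "exp (w/3) < exp (v/3)" using vw by simp
  hence A3: "exp (v/3) - 1 > B / s\<^sup>2 - 1" using ew by simp
  have A4: "6 * k0 * (B / s\<^sup>2 - 1) \<ge> 24 * R\<^sup>2 / s\<^sup>2"
  proof -
    have s4: "s\<^sup>2 \<le> R^4" 
    proof -
      have "s\<^sup>2 \<le> (R\<^sup>2)\<^sup>2" by (rule power_mono) (use s in auto)
      also have "(R\<^sup>2)\<^sup>2 = R^4" by simp
      finally show ?thesis .
    qed
    have "6 * k0 * (B / s\<^sup>2 - 1) = 24 * R\<^sup>2 / s\<^sup>2 + 6 * k0 * (R^4 / s\<^sup>2 - 1)"
      using B k0 s by (simp add: field_simps)
    moreover have "R^4 / s\<^sup>2 \<ge> 1" using s4 s by simp
    ultimately show ?thesis using k0 by simp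
  qed
  have "6 * (k0 * exp (v/3)) * (1 - exp (- v)) = 6 * k0 * (exp (v/3) * (1 - exp (- v)))" by simp
  also have "\<dots> > 6 * k0 * (B / s\<^sup>2 - 1)" using A2 A3 k0 by simp
  finally show ?thesis using A1 A4 by linarith
qed

lemma k0_bound:
  fixes lam m :: real assumes "lam > 0" "m > 0"
  shows "(2 * lam\<^sup>2 * m\<^sup>2) powr (1/3) \<ge> lam powr (2/3) * m powr (2/3)"
proof -
  have le: "lam\<^sup>2 * m\<^sup>2 \<le> 2 * lam\<^sup>2 * m\<^sup>2" using assms by simp
  have "(lam\<^sup>2 * m\<^sup>2) powr (1/3) \<le> (2 * lam\<^sup>2 * m\<^sup>2) powr (1/3)"
    by (rule powr_mono2) (use le in auto)
  moreover have "(lam\<^sup>2 * m\<^sup>2) powr (1/3) = lam powr (2/3) * m powr (2/3)"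
  proof -
    have l2: "lam\<^sup>2 = lam powr 2" using assms by (simp add: powr_numeral)
    have m2: "m\<^sup>2 = m powr 2" using assms by (simp add: powr_numeral)
    have "(lam\<^sup>2 * m\<^sup>2) powr (1/3) = (lam\<^sup>2) powr (1/3) * (m\<^sup>2) powr (1/3)"
      by (rule powr_mult)
    also have "(lam\<^sup>2) powr (1/3) = lam powr (2/3)"
      unfolding l2 powr_powr by simp
    also have "(m\<^sup>2) powr (1/3) = m powr (2/3)"
      unfolding m2 powr_powr by simp
    finally show ?thesis .
  qed
  ultimately show ?thesis by simp
qed

lemma disk:
  fixes f r :: "complex \<Rightarrow> real" and V :: "complex \<Rightarrow> complex"
  assumes S: "open S" and f: "Ck 2 S f" and r: "Ck 2 S r" "\<And>s. s \<in> S \<Longrightarrow> r s > 0"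
    and V: "V holomorphic_on S"
    and eq: "\<And>z. z \<in> S \<Longrightarrow> lap0 f z + lap0 (\<lambda>w. ln (r w)) z =
             2 * r z * exp (f z) - 4 * exp (-2 * f z) * lam\<^sup>2 * (cmod (V z))\<^sup>2 / (r z)\<^sup>2"
    and lam: "lam > 0" and R: "R > 0" and m: "m > 0" and cb: "cball z0 R \<subseteq> S"
    and Vm: "\<And>s. s \<in> cball z0 R \<Longrightarrow> cmod (V s) \<ge> m"
  shows "lam\<^sup>2 * (cmod (V z0))\<^sup>2 / (r z0)^3 * exp (-3 * f z0) \<ge> 1/2 - 6 / (m powr (2/3) * R\<^sup>2) * lam powr (-2/3)"
proof -
  define Q where "Q = (\<lambda>s. 3 * f s + 3 * ln (r s) - ln ((cmod (V s))\<^sup>2))"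
  define c0 where "c0 = ln (2 * lam\<^sup>2)"
  define v where "v = (\<lambda>s. Q s - c0)"
  define k0 where "k0 = (2 * lam\<^sup>2 * m\<^sup>2) powr (1/3)"
  define B where "B = 4 * R\<^sup>2 / k0 + R^4"
  define w where "w = (\<lambda>s. 3 * ln B - 6 * ln (R\<^sup>2 - (cmod (s - z0))\<^sup>2))"
  define N where "N = (\<lambda>s. lam\<^sup>2 * (cmod (V s))\<^sup>2 / (r s)^3 * exp (-3 * f s))"
  have k0: "k0 > 0" using lam m by (simp add: k0_def)
  have k03: "k0^3 = 2 * lam\<^sup>2 * m\<^sup>2" unfolding k0_def using lam m by (intro cube_root_cube) simp
  have Vnz: "cmod (V s) > 0" if "s \<in> cball z0 R" for s using Vm[OF that] m by linarith
  have rpos: "r s > 0" if "s \<in> cball z0 R" for s using r(2) cb that by auto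
  have expQ: "exp (Q s) = (r s * exp (f s))^3 / (cmod (V s))\<^sup>2" if "s \<in> cball z0 R" for s
    unfolding Q_def by (rule Qexp) (use Vnz[OF that] rpos[OF that] in auto)
  have expv: "exp (v s) = exp (Q s) / (2 * lam\<^sup>2)" for s
    unfolding v_def c0_def using lam by (simp add: exp_diff)
  have Nv: "N s = exp (- v s) / 2" if "s \<in> cball z0 R" for s
  proof -
    have "exp (- v s) = 1 / exp (v s)" by (simp add: exp_minus divide_inverse)
    also have "\<dots> = 2 * lam\<^sup>2 * (cmod (V s))\<^sup>2 / (r s * exp (f s))^3"
      using expv expQ[OF that] Vnz[OF that] rpos[OF that] lam by simp
    finally have e: "exp (- v s) = 2 * lam\<^sup>2 * (cmod (V s))\<^sup>2 / (r s * exp (f s))^3" .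
    have "N s = lam\<^sup>2 * (cmod (V s))\<^sup>2 / ((r s * exp (f s))^3)"
      unfolding N_def exp_m3 by (simp add: power_mult_distrib)
    thus ?thesis using e by simp
  qed
  have Ek: "r s * exp (f s) \<ge> k0 * exp (v s / 3)" if "s \<in> cball z0 R" for s
  proof -
    have "(r s * exp (f s))^3 = (cmod (V s))\<^sup>2 * exp (Q s)"
      using expQ[OF that] Vnz[OF that] by simp
    also have "\<dots> = (cmod (V s))\<^sup>2 * (2 * lam\<^sup>2) * exp (v s)"
      using expv[of s] lam by simp
    also have "\<dots> \<ge> m\<^sup>2 * (2 * lam\<^sup>2) * exp (v s)"
      using Vm[OF that] m lam Vnz[OF that] by (intro mult_right_mono power_mono) auto
    also have "m\<^sup>2 * (2 * lam\<^sup>2) * exp (v s) = (k0 * exp (v s / 3))^3"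
    proof -
      have "(exp (v s / 3))^3 = exp (3 * (v s / 3))" by (metis exp_of_nat_mult of_nat_numeral)
      hence "exp (v s) = (exp (v s / 3))^3" by simp
      thus ?thesis by (simp add: power_mult_distrib k03)
    qed
    finally have "(k0 * exp (v s / 3))^3 \<le> (r s * exp (f s))^3" .
    thus ?thesis using power_mono_iff[of "k0 * exp (v s / 3)" "r s * exp (f s)" 3] k0 rpos[OF that] by simp
  qed
  have contf: "continuous_on S f" by (rule Ck2_cont[OF f])
  have contr: "continuous_on S r" by (rule Ck2_cont[OF r(1)])
  have contV: "continuous_on S V" using V by (rule holomorphic_on_imp_continuous_on)
  have vcont: "continuous_on (cball z0 R) v"
  proof -
    have c1: "continuous_on (cball z0 R) f" using contf cb by (rule continuous_on_subset)
    have c2: "continuous_on (cball z0 R) r" using contr cb by (rule continuous_on_subset)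
    have c3: "continuous_on (cball z0 R) V" using contV cb by (rule continuous_on_subset)
    have c4: "continuous_on (cball z0 R) (\<lambda>s. ln (r s))"
      by (rule continuous_on_ln[OF c2]) (use rpos in force)
    have c5: "continuous_on (cball z0 R) (\<lambda>s. (cmod (V s))\<^sup>2)"
      by (intro continuous_intros c3)
    have c6: "continuous_on (cball z0 R) (\<lambda>s. ln ((cmod (V s))\<^sup>2))"
      by (rule continuous_on_ln[OF c5]) (use Vnz in force)
    show ?thesis unfolding v_def Q_def by (intro continuous_intros c1 c4 c6)
  qed
  have main: "v z0 \<le> w z0"
  proof (rule ccontr)
    assume "\<not> v z0 \<le> w z0"
    hence vw0: "v z0 > w z0" by simp
    define \<Phi> where "\<Phi> = (\<lambda>s. v s - w s)"
    have P0: "\<Phi> z0 > 0" using vw0 by (simp add: \<Phi>_def)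
    obtain M where M: "\<And>s. s \<in> cball z0 R \<Longrightarrow> v s \<le> M"
    proof -
      have "cball z0 R \<noteq> {}" using R by simp
      then obtain x where "\<forall>y\<in>cball z0 R. v y \<le> v x"
        using continuous_attains_sup[OF compact_cball _ vcont] by blast
      thus ?thesis using that by blast
    qed
    define \<sigma> where "\<sigma> = min (R\<^sup>2/2) (exp ((3 * ln B - M + \<Phi> z0 - 1)/6))"
    have \<sigma>: "\<sigma> > 0" "\<sigma> \<le> R\<^sup>2/2" using R by (auto simp: \<sigma>_def)
    have ls: "6 * ln \<sigma> \<le> 3 * ln B - M + \<Phi> z0 - 1"
    proof -
      have "ln \<sigma> \<le> ln (exp ((3 * ln B - M + \<Phi> z0 - 1)/6))"
        using \<sigma>(1) by (subst ln_le_cancel_iff) (auto simp: \<sigma>_def)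
      thus ?thesis by simp
    qed
    define r' where "r' = sqrt (R\<^sup>2 - \<sigma>)"
    have r'sq: "r'\<^sup>2 = R\<^sup>2 - \<sigma>" using \<sigma> by (simp add: r'_def)
    have r'pos: "r' > 0" using \<sigma> R by (simp add: r'_def)
    have r'R: "r' < R"
    proof -
      have "r'\<^sup>2 < R\<^sup>2" using r'sq \<sigma> by simp
      thus ?thesis using R r'pos by (simp add: power_less_imp_less_base)
    qed
    have sub: "cball z0 r' \<subseteq> cball z0 R" using r'R by auto
    have wpos: "R\<^sup>2 - (cmod (s - z0))\<^sup>2 \<ge> \<sigma>" if "s \<in> cball z0 r'" for s
    proof -
      have "cmod (s - z0) \<le> r'" using that by (simp add: dist_norm norm_minus_commute)
      hence "(cmod (s - z0))\<^sup>2 \<le> r'\<^sup>2" by (simp add: power_mono)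
      thus ?thesis using r'sq by simp
    qed
    have Pcont: "continuous_on (cball z0 r') \<Phi>"
    proof -
      have "continuous_on (cball z0 r') v" using vcont sub by (rule continuous_on_subset)
      moreover have "continuous_on (cball z0 r') w"
        unfolding w_def
        by (intro continuous_intros continuous_on_ln) (use wpos \<sigma> in force)+
      ultimately show ?thesis unfolding \<Phi>_def by (intro continuous_intros)
    qed
    obtain zs where zs: "zs \<in> cball z0 r'" "\<And>s. s \<in> cball z0 r' \<Longrightarrow> \<Phi> s \<le> \<Phi> zs"
    proof -
      have "cball z0 r' \<noteq> {}" using r'pos by simp
      then obtain x where "x \<in> cball z0 r'" "\<forall>y\<in>cball z0 r'. \<Phi> y \<le> \<Phi> x"
        using continuous_attains_sup[OF compact_cball _ Pcont] by blast
      thus ?thesis using that by blast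
    qed
    have Pzs: "\<Phi> zs \<ge> \<Phi> z0" using zs r'pos by simp
    have zsR: "zs \<in> cball z0 R" using zs sub by auto
    have inner: "dist z0 zs < r'"
    proof (rule ccontr)
      assume "\<not> dist z0 zs < r'"
      hence "dist z0 zs = r'" using zs(1) by simp
      hence "cmod (zs - z0) = r'" by (simp add: dist_norm norm_minus_commute)
      hence "R\<^sup>2 - (cmod (zs - z0))\<^sup>2 = \<sigma>" using r'sq by simp
      hence "w zs = 3 * ln B - 6 * ln \<sigma>" by (simp add: w_def)
      hence "w zs \<ge> M - \<Phi> z0 + 1" using ls by simp
      moreover have "v zs \<le> M" using M zsR by simp
      ultimately have "\<Phi> zs \<le> \<Phi> z0 - 1" by (simp add: \<Phi>_def)
      thus False using Pzs by simp
    qed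
    define e where "e = r' - dist z0 zs"
    have e: "e > 0" using inner by (simp add: e_def)
    have locmax: "\<Phi> s \<le> \<Phi> zs" if "s \<in> ball zs e" for s
    proof -
      have "dist z0 s \<le> dist z0 zs + dist zs s" by (rule dist_triangle)
      hence "s \<in> cball z0 r'" using that by (simp add: e_def)
      thus ?thesis by (rule zs(2))
    qed
    have zsS: "zs \<in> S" using zsR cb by auto
    have Vzs: "V zs \<noteq> 0" using Vnz[OF zsR] by auto
    obtain qa qb where dQ: "d2 Q zs qa qb"
      and qab: "qa + qb = 6 * (r zs * exp (f zs)) * (1 - 2 * N zs)"
      using KPd2[OF S zsS f r V Vzs eq[OF zsS]] unfolding Q_def N_def by blast
    have zsin: "cmod (zs - z0) < R" using inner r'R by (simp add: dist_norm norm_minus_commute)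
    obtain aw bw where dw: "d2 w zs aw bw" and wab: "aw + bw = 24 * R\<^sup>2 / (R\<^sup>2 - (cmod (zs - z0))\<^sup>2)\<^sup>2"
      using d2_barrier[OF zsin, of B] unfolding w_def by blast
    have dP: "d2 \<Phi> zs (qa - 0 - aw) (qb - 0 - bw)"
      unfolding \<Phi>_def v_def by (rule d2_diff[OF d2_diff[OF dQ d2_const] dw])
    have "qa - 0 - aw \<le> 0 \<and> qb - 0 - bw \<le> 0" by (rule d2_max[OF dP e locmax])
    hence le: "6 * (r zs * exp (f zs)) * (1 - exp (- v zs)) \<le> 24 * R\<^sup>2 / (R\<^sup>2 - (cmod (zs - z0))\<^sup>2)\<^sup>2"
      using qab wab Nv[OF zsR] by simp
    have sz: "R\<^sup>2 - (cmod (zs - z0))\<^sup>2 > 0" "R\<^sup>2 - (cmod (zs - z0))\<^sup>2 \<le> R\<^sup>2"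
      using wpos[of zs] zs(1) \<sigma> by auto
    have "6 * (r zs * exp (f zs)) * (1 - exp (- v zs)) > 24 * R\<^sup>2 / (R\<^sup>2 - (cmod (zs - z0))\<^sup>2)\<^sup>2"
      by (rule alg_contra[OF Ek[OF zsR] k0 B_def sz refl _ R])
         (use Pzs P0 in \<open>simp add: \<Phi>_def w_def\<close>)
    thus False using le by simp
  qed
  have x0: "4 / (k0 * R\<^sup>2) \<ge> 0" using k0 R by simp
  have wz0: "w z0 \<le> 12 / (k0 * R\<^sup>2)"
  proof -
    have Bp: "B > 0" using k0 R by (simp add: B_def add_pos_pos)
    have "w z0 = 3 * (ln B - 2 * ln (R\<^sup>2))" by (simp add: w_def)
    also have "ln B - 2 * ln (R\<^sup>2) = ln (B / R^4)"
    proof -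
      have "2 * ln (R\<^sup>2) = ln ((R\<^sup>2)^2)" using R by (simp add: ln_realpow)
      thus ?thesis using Bp R by (simp add: ln_div)
    qed
    also have "B / R^4 = 1 + 4 / (k0 * R\<^sup>2)" using k0 R by (simp add: B_def field_simps power2_eq_square power4_eq_xxxx)
    also have "3 * ln (1 + 4 / (k0 * R\<^sup>2)) \<le> 3 * (4 / (k0 * R\<^sup>2))"
      using ln_add_one_self_le_self[OF x0] by simp
    finally show ?thesis by simp
  qed
  have z0c: "z0 \<in> cball z0 R" using R by simp
  have "N z0 \<ge> 1/2 - 6 / (k0 * R\<^sup>2)"
  proof -
    have "N z0 = exp (- v z0) / 2" by (rule Nv[OF z0c])
    also have "exp (- v z0) \<ge> 1 - v z0" by (rule exp_minus_ge)
    hence "exp (- v z0) / 2 \<ge> (1 - v z0) / 2" by simp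
    finally show ?thesis using main wz0 by simp
  qed
  moreover have "6 / (k0 * R\<^sup>2) \<le> 6 / (m powr (2/3) * R\<^sup>2) * lam powr (-2/3)"
  proof -
    have L: "k0 \<ge> lam powr (2/3) * m powr (2/3)" unfolding k0_def by (rule k0_bound[OF lam m])
    have Lp: "lam powr (2/3) * m powr (2/3) > 0" using lam m by simp
    have "6 / (k0 * R\<^sup>2) \<le> 6 / (lam powr (2/3) * m powr (2/3) * R\<^sup>2)"
      using L Lp R by (intro divide_left_mono mult_right_mono mult_pos_pos) auto
    also have "lam powr (-2/3) = 1 / lam powr (2/3)"
      using powr_minus_divide[of lam "2/3"] by simp
    hence "6 / (lam powr (2/3) * m powr (2/3) * R\<^sup>2) = 6 / (m powr (2/3) * R\<^sup>2) * lam powr (-2/3)"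
      by simp
    finally show ?thesis .
  qed
  ultimately show ?thesis unfolding N_def by simp
qed



lemma NQ:
  assumes "(r::real) > 0" "(c::real) > 0"
  shows "lam\<^sup>2 * c / r^3 * exp (-3 * f) = lam\<^sup>2 / exp (3 * f + 3 * ln r - ln c)"
proof -
  have "exp (3 * f + 3 * ln r - ln c) = (r * exp f)^3 / c" by (rule Qexp[OF assms])
  thus ?thesis unfolding exp_m3 using assms by (simp add: power_mult_distrib)
qed

lemma upper_local:
  fixes f r :: "complex \<Rightarrow> real" and V :: "complex \<Rightarrow> complex"
  assumes S: "open S" "z \<in> S" and f: "Ck 2 S f" and r: "Ck 2 S r" "\<And>s. s \<in> S \<Longrightarrow> r s > 0"
    and V: "V holomorphic_on S"
    and eq: "lap0 f z + lap0 (\<lambda>w. ln (r w)) z =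
             2 * r z * exp (f z) - 4 * exp (-2 * f z) * lam\<^sup>2 * (cmod (V z))\<^sup>2 / (r z)\<^sup>2"
    and lam: "lam > 0"
    and mx: "\<And>s. s \<in> S \<Longrightarrow> lam\<^sup>2 * (cmod (V s))\<^sup>2 / (r s)^3 * exp (-3 * f s) \<le> lam\<^sup>2 * (cmod (V z))\<^sup>2 / (r z)^3 * exp (-3 * f z)"
    and pos: "lam\<^sup>2 * (cmod (V z))\<^sup>2 / (r z)^3 * exp (-3 * f z) > 0"
  shows "lam\<^sup>2 * (cmod (V z))\<^sup>2 / (r z)^3 * exp (-3 * f z) \<le> 1/2"
proof -
  define Q where "Q = (\<lambda>s. 3 * f s + 3 * ln (r s) - ln ((cmod (V s))\<^sup>2))"
  define N where "N = (\<lambda>s. lam\<^sup>2 * (cmod (V s))\<^sup>2 / (r s)^3 * exp (-3 * f s))"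
  have Vz: "V z \<noteq> 0" using pos by auto
  obtain e0 where e0: "e0 > 0" "ball z e0 \<subseteq> S" using S open_contains_ball by blast
  have "continuous (at z) V"
    using V S holomorphic_on_imp_continuous_on continuous_on_eq_continuous_at by blast
  then obtain e1 where e1: "e1 > 0" "\<And>y. dist z y < e1 \<Longrightarrow> V y \<noteq> 0"
    using continuous_at_avoid[of z V 0] Vz by blast
  define e where "e = min e0 e1"
  have e: "e > 0" "ball z e \<subseteq> S" "\<And>s. s \<in> ball z e \<Longrightarrow> V s \<noteq> 0"
    using e0 e1 by (auto simp: e_def)
  have NQs: "N s = lam\<^sup>2 / exp (Q s)" if "s \<in> S" "V s \<noteq> 0" for s
    unfolding N_def Q_def by (rule NQ) (use that r(2) in auto)
  have lm: "- Q s \<le> - Q z" if "s \<in> ball z e" for s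
  proof -
    have sS: "s \<in> S" using that e by auto
    have "lam\<^sup>2 / exp (Q s) \<le> lam\<^sup>2 / exp (Q z)"
      using mx[OF sS] NQs[OF sS e(3)[OF that]] NQs[OF S(2) Vz] unfolding N_def by simp
    hence "exp (Q z) \<le> exp (Q s)" using lam by (simp add: divide_le_cancel field_simps)
    thus ?thesis by simp
  qed
  obtain qa qb where dQ: "d2 Q z qa qb"
    and qab: "qa + qb = 6 * (r z * exp (f z)) * (1 - 2 * N z)"
    using KPd2[OF S f r V Vz eq] unfolding Q_def N_def by blast
  have "- 1 * qa \<le> 0 \<and> - 1 * qb \<le> 0"
    by (rule d2_max[OF d2_cmult[OF dQ, of "-1"] e(1)]) (use lm in simp)
  hence "6 * (r z * exp (f z)) * (1 - 2 * N z) \<ge> 0" using qab by simp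
  moreover have "r z * exp (f z) > 0" using r(2)[OF S(2)] by simp
  ultimately have "1 - 2 * N z \<ge> 0" by (simp add: zero_le_mult_iff)
  thus ?thesis unfolding N_def by linarith
qed



lemma chart:
  assumes "riemann_surface X A" "c \<in> A"
  shows "openin X (fst c)" "open (snd c ` fst c)"
    "homeomorphic_map (subtopology X (fst c)) (top_of_set (snd c ` fst c)) (snd c)"
    "inj_on (snd c) (fst c)" "fst c \<subseteq> topspace X"
proof -
  obtain U \<phi> where c: "c = (U, \<phi>)" by (cases c)
  have "openin X U \<and> open (\<phi> ` U) \<and> homeomorphic_map (subtopology X U) (top_of_set (\<phi> ` U)) \<phi>"
    using assms unfolding riemann_surface_def c by fast
  thus o: "openin X (fst c)" "open (snd c ` fst c)"
    and h: "homeomorphic_map (subtopology X (fst c)) (top_of_set (snd c ` fst c)) (snd c)"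
    by (simp_all add: c)
  show s: "fst c \<subseteq> topspace X" using o(1) by (rule openin_subset)
  have "inj_on (snd c) (topspace (subtopology X (fst c)))" by (rule homeomorphic_imp_injective_map[OF h])
  thus "inj_on (snd c) (fst c)" using s by (simp add: Int_absorb1)
qed

lemma chart_inv:
  assumes "riemann_surface X A" "c \<in> A" "p \<in> fst c"
  shows "inv_into (fst c) (snd c) (snd c p) = p"
  using chart(4)[OF assms(1,2)] assms(3) by (simp add: inv_into_f_f)

lemma chart_cont_pre:
  assumes "riemann_surface X A" "c \<in> A" "continuous_on (snd c ` fst c) g" "open W"
  shows "openin X {x \<in> fst c. g (snd c x) \<in> W}"
proof -
  have cm: "continuous_map (subtopology X (fst c)) (top_of_set (snd c ` fst c)) (snd c)"
    using homeomorphic_imp_continuous_map[OF chart(3)[OF assms(1,2)]] .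
  have cg: "continuous_map (top_of_set (snd c ` fst c)) euclidean g"
    using assms(3) by (simp add: continuous_map_iff_continuous)
  have "continuous_map (subtopology X (fst c)) euclidean (g \<circ> snd c)"
    by (rule continuous_map_compose[OF cm cg])
  moreover have "openin euclidean W" using assms(4) by simp
  ultimately have "openin (subtopology X (fst c)) {x \<in> topspace (subtopology X (fst c)). (g \<circ> snd c) x \<in> W}"
    by (rule openin_continuous_map_preimage)
  moreover have "{x \<in> topspace (subtopology X (fst c)). (g \<circ> snd c) x \<in> W} = {x \<in> fst c. g (snd c x) \<in> W}"
    using chart(5)[OF assms(1,2)] by auto
  ultimately have "openin (subtopology X (fst c)) {x \<in> fst c. g (snd c x) \<in> W}" by simp
  thus ?thesis by (rule openin_trans_full[OF _ chart(1)[OF assms(1,2)]])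
qed

lemma N_inv:
  assumes RS: "riemann_surface X A" and CM: "conformal_metric A rho" and HC: "holo_cubic_diff A U0"
    and cd: "c \<in> A" "d \<in> A" and p: "p \<in> fst c" "p \<in> fst d"
  shows "cubic_norm2 rho (\<lambda>c z. complex_of_real lam * U0 c z) c (snd c p) =
         cubic_norm2 rho (\<lambda>c z. complex_of_real lam * U0 c z) d (snd d p)"
proof -
  define z where "z = snd c p"
  define T where "T = transition c d"
  have zin: "z \<in> snd c ` (fst c \<inter> fst d)" using p by (simp add: z_def)
  have Tz: "T z = snd d p" unfolding T_def z_def transition_def using chart_inv[OF RS cd(1) p(1)] by simp
  have rh: "rho c z = rho d (T z) * (cmod (deriv T z))\<^sup>2"
    using CM cd zin unfolding conformal_metric_def T_def by blast
  have uh: "U0 c z = U0 d (T z) * (deriv T z) ^ 3"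
    using HC cd zin unfolding holo_cubic_diff_def T_def by blast
  have rpos: "rho c z > 0" using CM cd p unfolding conformal_metric_def z_def by blast
  have Tn: "cmod (deriv T z) \<noteq> 0" using rh rpos by auto
  define a where "a = cmod (U0 d (T z))"
  define t where "t = cmod (deriv T z)"
  define \<rho> where "\<rho> = rho d (T z)"
  have n1: "(cmod (complex_of_real lam * U0 c z))\<^sup>2 = lam\<^sup>2 * a\<^sup>2 * (t ^ 3)\<^sup>2"
    unfolding uh a_def t_def by (simp add: norm_mult norm_power power_mult_distrib)
  have n2: "(rho c z)^3 = \<rho>^3 * (t\<^sup>2)^3"
    unfolding rh \<rho>_def t_def by (simp add: power_mult_distrib)
  have e6: "(t ^ 3)\<^sup>2 = (t\<^sup>2)^3" by (simp flip: power_mult)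
  have t0: "(t\<^sup>2)^3 \<noteq> 0" using Tn by (simp add: t_def)
  have "cubic_norm2 rho (\<lambda>c z. complex_of_real lam * U0 c z) c z = lam\<^sup>2 * a\<^sup>2 / \<rho>^3"
    unfolding cubic_norm2_def n1 n2 e6 using t0 by simp
  also have "\<dots> = cubic_norm2 rho (\<lambda>c z. complex_of_real lam * U0 c z) d (T z)"
    unfolding cubic_norm2_def a_def \<rho>_def by (simp add: norm_mult power_mult_distrib)
  finally show ?thesis using Tz by (simp add: z_def)
qed



lemma chart_f_smooth:
  assumes "solves_eq A rho W u" "c \<in> A"
  shows "Ck 2 (snd c ` fst c) (u \<circ> inv_into (fst c) (snd c))"
  using assms unfolding solves_eq_def smooth_fun_def smooth_on_def by blast

lemma chart_rho:
  assumes "conformal_metric A rho" "c \<in> A"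
  shows "Ck 2 (snd c ` fst c) (rho c)" "\<And>s. s \<in> snd c ` fst c \<Longrightarrow> rho c s > 0"
  using assms unfolding conformal_metric_def smooth_on_def by blast+

lemma chart_holo:
  assumes "holo_cubic_diff A U0" "c \<in> A"
  shows "U0 c holomorphic_on (snd c ` fst c)"
  using assms unfolding holo_cubic_diff_def by blast

lemma Nc_Nl:
  assumes RS: "riemann_surface X A" and c: "c \<in> A" and p: "p \<in> fst c"
  shows "cubic_norm2 rho (\<lambda>c z. complex_of_real lam * U0 c z) c (snd c p) * exp (-3 * u p) =
    lam\<^sup>2 * (cmod (U0 c (snd c p)))\<^sup>2 / (rho c (snd c p))^3 * exp (-3 * (u \<circ> inv_into (fst c) (snd c)) (snd c p))"
  using chart_inv[OF RS c p] unfolding cubic_norm2_def by (simp add: norm_mult power_mult_distrib)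

lemma chart_eq:
  assumes RS: "riemann_surface X A" and CM: "conformal_metric A rho"
    and sol: "solves_eq A rho (\<lambda>c z. complex_of_real lam * U0 c z) u" and c: "c \<in> A"
    and z: "z \<in> snd c ` fst c"
  shows "lap0 (u \<circ> inv_into (fst c) (snd c)) z + lap0 (\<lambda>w. ln (rho c w)) z =
      2 * rho c z * exp ((u \<circ> inv_into (fst c) (snd c)) z)
      - 4 * exp (-2 * (u \<circ> inv_into (fst c) (snd c)) z) * lam\<^sup>2 * (cmod (U0 c z))\<^sup>2 / (rho c z)\<^sup>2"
proof -
  obtain p where p: "p \<in> fst c" "z = snd c p" using z by blast
  have fz: "(u \<circ> inv_into (fst c) (snd c)) z = u p" using chart_inv[OF RS c p(1)] p(2) by simp
  have rz: "rho c z > 0" using chart_rho(2)[OF CM c z] .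
  define L where "L = lap0 (u \<circ> inv_into (fst c) (snd c)) z"
  define Lr where "Lr = lap0 (\<lambda>w. ln (rho c w)) z"
  have "L / rho c z + 4 * exp (-2 * u p) * (lam\<^sup>2 * (cmod (U0 c z))\<^sup>2 / (rho c z)^3) - 2 * exp (u p)
        - 2 * (- Lr / (2 * rho c z)) = 0"
    using sol c p unfolding solves_eq_def Let_def laplacian_def gauss_curvature_def cubic_norm2_def L_def Lr_def
    by (auto simp: norm_mult power_mult_distrib)
  hence "L + Lr = 2 * rho c z * exp (u p) - 4 * exp (-2 * u p) * lam\<^sup>2 * (cmod (U0 c z))\<^sup>2 / (rho c z)\<^sup>2"
    using rz by (simp add: field_simps power2_eq_square power3_eq_cube)
  thus ?thesis unfolding L_def Lr_def fz .
qed



lemma upper_global: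
  assumes RS: "riemann_surface X A" and CM: "conformal_metric A rho" and HC: "holo_cubic_diff A U0"
    and lam: "lam > 0" and sol: "solves_eq A rho (\<lambda>c z. complex_of_real lam * U0 c z) u"
    and c: "c \<in> A" and p: "p \<in> fst c"
  shows "cubic_norm2 rho (\<lambda>c z. complex_of_real lam * U0 c z) c (snd c p) * exp (-3 * u p) \<le> 1/2"
proof -
  define Nc where "Nc = (\<lambda>c p. cubic_norm2 rho (\<lambda>c z. complex_of_real lam * U0 c z) c (snd c p) * exp (-3 * u p))"
  define Nl where "Nl = (\<lambda>c z. lam\<^sup>2 * (cmod (U0 c z))\<^sup>2 / (rho c z)^3 * exp (-3 * (u \<circ> inv_into (fst c) (snd c)) z))"
  define Nf where "Nf = (\<lambda>p. Nc (SOME c. c \<in> A \<and> p \<in> fst c) p)"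
  have cover: "\<exists>c\<in>A. p \<in> fst c" if "p \<in> topspace X" for p
    using RS that unfolding riemann_surface_def by blast
  have NcNl: "Nc c p = Nl c (snd c p)" if "c \<in> A" "p \<in> fst c" for c p
    unfolding Nc_def Nl_def by (rule Nc_Nl[OF RS that])
  have Nf_eq: "Nf p = Nc c p" if "c \<in> A" "p \<in> fst c" for c p
  proof -
    define d where "d = (SOME c. c \<in> A \<and> p \<in> fst c)"
    have d: "d \<in> A \<and> p \<in> fst d" unfolding d_def by (rule someI[of _ c]) (use that in simp)
    have "Nf p = Nc d p" by (simp add: Nf_def d_def)
    also have "\<dots> = Nc c p" unfolding Nc_def using N_inv[OF RS CM HC, of d c p lam] d that by simp
    finally show ?thesis .
  qed
  have Nlcont: "continuous_on (snd c ` fst c) (Nl c)" if "c \<in> A" for c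
  proof -
    have c1: "continuous_on (snd c ` fst c) (u \<circ> inv_into (fst c) (snd c))"
      by (rule Ck2_cont[OF chart_f_smooth[OF sol that]])
    have c2: "continuous_on (snd c ` fst c) (rho c)" by (rule Ck2_cont[OF chart_rho(1)[OF CM that]])
    have c3: "continuous_on (snd c ` fst c) (U0 c)"
      by (rule holomorphic_on_imp_continuous_on[OF chart_holo[OF HC that]])
    have "\<forall>s\<in>snd c ` fst c. (rho c s)^3 \<noteq> 0" using chart_rho(2)[OF CM that] by (metis less_irrefl power_not_zero)
    thus ?thesis unfolding Nl_def by (intro continuous_intros c1 c2 c3) auto
  qed
  have cm: "continuous_map X euclideanreal Nf"
    unfolding continuous_map_openin_preimage_eq
  proof (intro conjI allI impI)
    show "Nf \<in> topspace X \<rightarrow> topspace euclideanreal" by simp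
  next
    fix W :: "real set" assume "openin euclideanreal W"
    hence W: "open W" by simp
    have "topspace X \<inter> Nf -` W = (\<Union>c\<in>A. {x \<in> fst c. Nl c (snd c x) \<in> W})"
    proof (intro equalityI subsetI)
      fix x assume x: "x \<in> topspace X \<inter> Nf -` W"
      then obtain c where c: "c \<in> A" "x \<in> fst c" using cover by blast
      thus "x \<in> (\<Union>c\<in>A. {x \<in> fst c. Nl c (snd c x) \<in> W})"
        using x Nf_eq[OF c] NcNl[OF c] by auto
    next
      fix x assume "x \<in> (\<Union>c\<in>A. {x \<in> fst c. Nl c (snd c x) \<in> W})"
      then obtain c where c: "c \<in> A" "x \<in> fst c" "Nl c (snd c x) \<in> W" by blast
      thus "x \<in> topspace X \<inter> Nf -` W"
        using Nf_eq[OF c(1,2)] NcNl[OF c(1,2)] chart(5)[OF RS c(1)] by auto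
    qed
    moreover have "openin X (\<Union>c\<in>A. {x \<in> fst c. Nl c (snd c x) \<in> W})"
      using chart_cont_pre[OF RS _ Nlcont W] by (intro openin_Union) auto
    ultimately show "openin X (topspace X \<inter> Nf -` W)" by simp
  qed
  have cs: "compact_space X" and ne: "topspace X \<noteq> {}" using RS unfolding riemann_surface_def by auto
  have "compactin euclideanreal (Nf ` topspace X)"
    using image_compactin[OF cs[unfolded compact_space_def] cm] .
  hence "compact (Nf ` topspace X)" by simp
  then obtain pm where pm: "pm \<in> topspace X" "\<And>q. q \<in> topspace X \<Longrightarrow> Nf q \<le> Nf pm"
    using compact_attains_sup[of "Nf ` topspace X"] ne by auto
  have max_le: "Nf pm \<le> 1/2"
  proof (cases "Nf pm \<le> 0")
    case True thus ?thesis by simp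
  next
    case False
    obtain d where d: "d \<in> A" "pm \<in> fst d" using cover pm(1) by blast
    have zS: "snd d pm \<in> snd d ` fst d" using d by simp
    have "Nl d (snd d pm) \<le> 1/2"
      unfolding Nl_def
    proof (rule upper_local[OF chart(2)[OF RS d(1)] zS chart_f_smooth[OF sol d(1)] chart_rho[OF CM d(1)]
              chart_holo[OF HC d(1)] chart_eq[OF RS CM sol d(1) zS] lam])
      fix s assume "s \<in> snd d ` fst d"
      then obtain q where q: "q \<in> fst d" "s = snd d q" by blast
      have "Nl d s = Nf q" using q Nf_eq[OF d(1) q(1)] NcNl[OF d(1) q(1)] by simp
      also have "\<dots> \<le> Nf pm" using pm(2) chart(5)[OF RS d(1)] q(1) by auto
      also have "\<dots> = Nl d (snd d pm)" using Nf_eq[OF d] NcNl[OF d] by simp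
      finally show "lam\<^sup>2 * (cmod (U0 d s))\<^sup>2 / (rho d s)^3 * exp (-3 * (u \<circ> inv_into (fst d) (snd d)) s)
          \<le> lam\<^sup>2 * (cmod (U0 d (snd d pm)))\<^sup>2 / (rho d (snd d pm))^3 * exp (-3 * (u \<circ> inv_into (fst d) (snd d)) (snd d pm))"
        unfolding Nl_def .
    next
      have "Nl d (snd d pm) = Nf pm" using Nf_eq[OF d] NcNl[OF d] by simp
      thus "0 < lam\<^sup>2 * (cmod (U0 d (snd d pm)))\<^sup>2 / (rho d (snd d pm))^3 * exp (-3 * (u \<circ> inv_into (fst d) (snd d)) (snd d pm))"
        using False unfolding Nl_def by simp
    qed
    thus ?thesis using Nf_eq[OF d] NcNl[OF d] by simp
  qed
  have "Nc c p = Nf p" using Nf_eq[OF c p] by simp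
  also have "\<dots> \<le> Nf pm" using pm(2) chart(5)[OF RS c] p by auto
  finally show ?thesis using max_le unfolding Nc_def by simp
qed



lemma lower_global:
  assumes RS: "riemann_surface X A" and CM: "conformal_metric A rho" and HC: "holo_cubic_diff A U0"
    and cK: "compactin X K" and nzK: "\<forall>c\<in>A. \<forall>p\<in>K \<inter> fst c. U0 c (snd c p) \<noteq> 0"
  shows "\<exists>C::real. \<forall>lam::real. \<forall>u. lam > 0 \<longrightarrow>
           solves_eq A rho (\<lambda>c z. complex_of_real lam * U0 c z) u \<longrightarrow>
           (\<forall>c\<in>A. \<forall>p\<in>K \<inter> fst c.
              cubic_norm2 rho (\<lambda>c z. complex_of_real lam * U0 c z) c (snd c p) * exp (-3 * u p)
                \<ge> 1/2 - C * lam powr (-2/3))"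
proof (cases "K = {}")
  case True thus ?thesis by auto
next
  case Kne: False
  have Kt: "K \<subseteq> topspace X" using cK by (rule compactin_subset_topspace)
  have cover: "\<exists>c\<in>A. p \<in> fst c" if "p \<in> topspace X" for p
    using RS that unfolding riemann_surface_def by blast
  have loc: "\<exists>c r. c \<in> A \<and> p \<in> fst c \<and> r > 0 \<and> cball (snd c p) (2*r) \<subseteq> snd c ` fst c \<and>
     (\<forall>s\<in>cball (snd c p) (2*r). cmod (U0 c s) \<ge> cmod (U0 c (snd c p)) / 2)" if pK: "p \<in> K" for p
  proof -
    obtain c where c: "c \<in> A" "p \<in> fst c" using cover Kt pK by blast
    define z where "z = snd c p"
    have zS: "z \<in> snd c ` fst c" using c by (simp add: z_def)
    have nz: "U0 c z \<noteq> 0" using nzK c pK by (auto simp: z_def)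
    obtain e0 where e0: "e0 > 0" "ball z e0 \<subseteq> snd c ` fst c"
      using chart(2)[OF RS c(1)] zS open_contains_ball by blast
    have "continuous (at z) (U0 c)"
      using chart_holo[OF HC c(1)] chart(2)[OF RS c(1)] zS holomorphic_on_imp_continuous_on
        continuous_on_eq_continuous_at by blast
    then obtain \<delta> where \<delta>: "\<delta> > 0" "\<And>y. dist y z < \<delta> \<Longrightarrow> dist (U0 c y) (U0 c z) < cmod (U0 c z) / 2"
      using nz unfolding continuous_at_eps_delta by (metis zero_less_norm_iff half_gt_zero)
    define r where "r = min e0 \<delta> / 4"
    have r: "r > 0" using e0 \<delta> by (simp add: r_def)
    have sub: "cball z (2*r) \<subseteq> ball z (min e0 \<delta>)" using r by (auto simp: r_def)
    have "ball z (min e0 \<delta>) \<subseteq> ball z e0" by auto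
    hence "cball z (2*r) \<subseteq> snd c ` fst c" using sub e0(2) by blast
    moreover have "cmod (U0 c s) \<ge> cmod (U0 c z) / 2" if "s \<in> cball z (2*r)" for s
    proof -
      have "s \<in> ball z (min e0 \<delta>)" using sub that by blast
      hence "dist s z < \<delta>" by (simp add: dist_commute)
      hence "cmod (U0 c s - U0 c z) < cmod (U0 c z) / 2" using \<delta>(2) by (simp add: dist_norm)
      moreover have "cmod (U0 c z) \<le> cmod (U0 c s) + cmod (U0 c s - U0 c z)"
        using norm_triangle_sub[of "U0 c z" "U0 c s"] by (simp add: norm_minus_commute)
      ultimately show ?thesis by simp
    qed
    ultimately show ?thesis using c r unfolding z_def by blast
  qed
  then obtain ch rr where chr: "\<And>p. p \<in> K \<Longrightarrow> ch p \<in> A \<and> p \<in> fst (ch p) \<and> rr p > 0 \<and>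
     cball (snd (ch p) p) (2 * rr p) \<subseteq> snd (ch p) ` fst (ch p) \<and>
     (\<forall>s\<in>cball (snd (ch p) p) (2 * rr p). cmod (U0 (ch p) s) \<ge> cmod (U0 (ch p) (snd (ch p) p)) / 2)"
    by metis
  define Op where "Op = (\<lambda>p. {x \<in> fst (ch p). snd (ch p) x \<in> ball (snd (ch p) p) (rr p)})"
  have Oopen: "openin X (Op p)" if "p \<in> K" for p
    unfolding Op_def using chart_cont_pre[OF RS _ continuous_on_id, of "ch p" "ball (snd (ch p) p) (rr p)"] chr[OF that]
    by simp
  have Ocov: "K \<subseteq> \<Union> (Op ` K)"
  proof
    fix p assume p: "p \<in> K"
    hence "p \<in> Op p" using chr[OF p] by (simp add: Op_def)
    thus "p \<in> \<Union> (Op ` K)" using p by blast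
  qed
  obtain F where F: "finite F" "F \<subseteq> Op ` K" "K \<subseteq> \<Union> F"
    using cK Oopen Ocov unfolding compactin_def by (metis (no_types, lifting) imageE)
  obtain K' where K': "K' \<subseteq> K" "finite K'" "F = Op ` K'"
    using finite_subset_image[OF F(1,2)] by blast
  have K'ne: "K' \<noteq> {}" using K' F(3) Kne by auto
  define mm where "mm = Min ((\<lambda>p. cmod (U0 (ch p) (snd (ch p) p)) / 2) ` K')"
  define R where "R = Min (rr ` K')"
  have mm: "mm > 0"
  proof -
    have "\<forall>p\<in>K'. cmod (U0 (ch p) (snd (ch p) p)) / 2 > 0"
      using chr nzK K'(1) by fastforce
    thus ?thesis unfolding mm_def using K'(2) K'ne by (simp add: Min_gr_iff)
  qed
  have Rp: "R > 0" unfolding R_def using K'(2) K'ne chr K'(1) by (auto simp: Min_gr_iff)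
  show ?thesis
  proof (intro exI[of _ "6 / (mm powr (2/3) * R\<^sup>2)"] allI impI ballI)
    fix lam :: real and u c q
    assume lam: "lam > 0" and sol: "solves_eq A rho (\<lambda>c z. complex_of_real lam * U0 c z) u"
      and c: "c \<in> A" and q: "q \<in> K \<inter> fst c"
    obtain p where p: "p \<in> K'" "q \<in> Op p" using q F(3) K'(3) by blast
    have pK: "p \<in> K" using p K' by auto
    define d where "d = ch p"
    have d: "d \<in> A" "p \<in> fst d" "rr p > 0" "cball (snd d p) (2 * rr p) \<subseteq> snd d ` fst d"
      "\<And>s. s \<in> cball (snd d p) (2 * rr p) \<Longrightarrow> cmod (U0 d s) \<ge> cmod (U0 d (snd d p)) / 2"
      using chr[OF pK] unfolding d_def by auto
    have qd: "q \<in> fst d" "dist (snd d p) (snd d q) < rr p" using p(2) unfolding Op_def d_def by auto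
    have Rle: "R \<le> rr p" unfolding R_def using K'(2) p(1) by simp
    have mle: "mm \<le> cmod (U0 d (snd d p)) / 2" unfolding mm_def d_def
      by (rule Min_le) (use K'(2) p(1) in auto)
    have cbs: "cball (snd d q) R \<subseteq> cball (snd d p) (2 * rr p)"
    proof
      fix s assume "s \<in> cball (snd d q) R"
      hence "dist (snd d q) s \<le> R" by simp
      moreover have "dist (snd d p) s \<le> dist (snd d p) (snd d q) + dist (snd d q) s" by (rule dist_triangle)
      ultimately show "s \<in> cball (snd d p) (2 * rr p)" using qd Rle by simp
    qed
    have zS: "\<And>z. z \<in> snd d ` fst d \<Longrightarrow> lap0 (u \<circ> inv_into (fst d) (snd d)) z + lap0 (\<lambda>w. ln (rho d w)) z =
      2 * rho d z * exp ((u \<circ> inv_into (fst d) (snd d)) z)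
      - 4 * exp (-2 * (u \<circ> inv_into (fst d) (snd d)) z) * lam\<^sup>2 * (cmod (U0 d z))\<^sup>2 / (rho d z)\<^sup>2"
      by (rule chart_eq[OF RS CM sol d(1)])
    have "lam\<^sup>2 * (cmod (U0 d (snd d q)))\<^sup>2 / (rho d (snd d q))^3 * exp (-3 * (u \<circ> inv_into (fst d) (snd d)) (snd d q))
          \<ge> 1/2 - 6 / (mm powr (2/3) * R\<^sup>2) * lam powr (-2/3)"
    proof (rule disk[OF chart(2)[OF RS d(1)] chart_f_smooth[OF sol d(1)] chart_rho[OF CM d(1)]
              chart_holo[OF HC d(1)] zS lam Rp mm])
      show "cball (snd d q) R \<subseteq> snd d ` fst d" using cbs d(4) by blast
      fix s assume "s \<in> cball (snd d q) R"
      hence "s \<in> cball (snd d p) (2 * rr p)" using cbs by blast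
      thus "mm \<le> cmod (U0 d s)" using d(5) mle by force
    qed
    moreover have "cubic_norm2 rho (\<lambda>c z. complex_of_real lam * U0 c z) c (snd c q) * exp (-3 * u q)
       = cubic_norm2 rho (\<lambda>c z. complex_of_real lam * U0 c z) d (snd d q) * exp (-3 * u q)"
      using N_inv[OF RS CM HC c d(1), of q lam] q qd by simp
    moreover have "\<dots> = lam\<^sup>2 * (cmod (U0 d (snd d q)))\<^sup>2 / (rho d (snd d q))^3 * exp (-3 * (u \<circ> inv_into (fst d) (snd d)) (snd d q))"
      by (rule Nc_Nl[OF RS d(1) qd(1)])
    ultimately show "cubic_norm2 rho (\<lambda>c z. complex_of_real lam * U0 c z) c (snd c q) * exp (-3 * u q)
                \<ge> 1/2 - 6 / (mm powr (2/3) * R\<^sup>2) * lam powr (-2/3)" by simp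
  qed
qed

theorem proposition4:
  fixes X :: "'a topology" and A :: "'a chart set"
    and rho :: "'a chart \<Rightarrow> complex \<Rightarrow> real" and U0 :: "'a chart \<Rightarrow> complex \<Rightarrow> complex"
    and g :: nat and K :: "'a set"
  assumes "riemann_surface X A" and "has_genus X g" and "g > 1"
    and "conformal_metric A rho"
    and "holo_cubic_diff A U0"
    and "\<exists>c\<in>A. \<exists>p\<in>fst c. U0 c (snd c p) \<noteq> 0"
    and "compactin X K"
    and "\<forall>c\<in>A. \<forall>p\<in>K \<inter> fst c. U0 c (snd c p) \<noteq> 0"
  shows "\<exists>C::real. \<forall>lam::real. \<forall>u. lam > 0 \<longrightarrow>
           solves_eq A rho (\<lambda>c z. complex_of_real lam * U0 c z) u \<longrightarrow>
           (\<forall>c\<in>A. \<forall>p\<in>K \<inter> fst c.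
              let N = cubic_norm2 rho (\<lambda>c z. complex_of_real lam * U0 c z) c (snd c p) * exp (-3 * u p)
              in 1/2 \<ge> N \<and> N \<ge> 1/2 - C * lam powr (-2/3))"
proof -
  obtain C where C: "\<forall>lam::real. \<forall>u. lam > 0 \<longrightarrow>
           solves_eq A rho (\<lambda>c z. complex_of_real lam * U0 c z) u \<longrightarrow>
           (\<forall>c\<in>A. \<forall>p\<in>K \<inter> fst c.
              cubic_norm2 rho (\<lambda>c z. complex_of_real lam * U0 c z) c (snd c p) * exp (-3 * u p)
                \<ge> 1/2 - C * lam powr (-2/3))"
    using lower_global[OF assms(1,4,5,7,8)] by blast
  show ?thesis
  proof (intro exI[of _ C] allI impI ballI)
    fix lam :: real and u c p
    assume lam: "lam > 0" and sol: "solves_eq A rho (\<lambda>c z. complex_of_real lam * U0 c z) u"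
      and c: "c \<in> A" and p: "p \<in> K \<inter> fst c"
    show "let N = cubic_norm2 rho (\<lambda>c z. complex_of_real lam * U0 c z) c (snd c p) * exp (-3 * u p)
              in 1/2 \<ge> N \<and> N \<ge> 1/2 - C * lam powr (-2/3)"
      unfolding Let_def
      using upper_global[OF assms(1,4,5) lam sol c] C lam sol c p by auto
  qed
qed

end
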